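(* Let $n\ge 2$ and $1\le m\le n-1$ be integers, and let $\alpha=(\alpha_0,\dots,\alpha_m)$ and $\beta=(\beta_0,\dots,\beta_m)$ be sequences of complex numbers. Let $A = T^{(\alpha,m)} - H^{(\alpha,m)}$ and $B = T^{(\beta,m)} - H^{(\beta,m)}$, where $T^{(\xi,m)}$ and $H^{(\xi,m)}$ are the $n\times n$ matrices defined in the context. Assume that $B$ is invertible. Set $h = \frac{1}{n+1/2}$ and, for $j=1,\dots,n$, $$\lambda_j = \frac{\alpha_0 + 2\sum_{l=1}^{m}\alpha_l\cos(l j\pi h)}{\beta_0 + 2\sum_{l=1}^{m}\beta_l\cos(l j\pi h)},\qquad \boldsymbol{x}_j=(x_{j,1},\dots,x_{j,n})^T,\quad x_{j,k} = C\sin\!\big(j\pi(k-1/2)h\big),\ k=1,\dots,n,$$ where $C\neq 0$ is a constant. Then for every $j=1,\dots,n$, $(\lambda_j,\boldsymbol{x}_j)$ is an eigenpair of the generalised matrix eigenvalue problem $A\boldsymbol{x}=\lambda B\boldsymbol{x}$, i.e. $A\boldsymbol{x}_j=\lambda_j B\boldsymbol{x}_j$.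
   Context: For a sequence $\xi=(\xi_0,\xi_1,\dots,\xi_m)$ of complex numbers and $m\le n-1$, $T^{(\xi,m)}\in\mathbb{C}^{n\times n}$ is the symmetric banded Toeplitz matrix with entries $T^{(\xi,m)}_{j,j+k}=\xi_{|k|}$ if $|k|\le m$ (for all $j$ and integers $k$ with $1\le j, j+k\le n$) and all other entries $0$. $H^{(\xi,m)}\in\mathbb{C}^{n\times n}$ is the Hankel-type matrix with entries: $H^{(\xi,m)}_{j,k}=\xi_{j+k-1}$ for $j=1,\dots,m$ and $k=1,\dots,m-j+1$ (upper-left corner); $H^{(\xi,m)}_{n-j+1,\,n-k+1}=\xi_{j+k}$ for $j=1,\dots,m-1$ and $k=1,\dots,m-j$ (lower-right corner; this part is empty when $m=1$); and all other entries $0$. For example, for $m=2$ the matrix $A=T^{(\alpha,2)}-H^{(\alpha,2)}$ has first row $(\alpha_0-\alpha_1,\ \alpha_1-\alpha_2,\ \alpha_2,0,\dots)$, second row $(\alpha_1-\alpha_2,\ \alpha_0,\ \alpha_1,\ \alpha_2,0,\dots)$, and last diagonal entry $\alpha_0-\alpha_2$, with all other entries as in $T^{(\alpha,2)}$. *)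

theory Defs
  imports Complex_Main "Jordan_Normal_Form.Matrix"
begin

text \<open>Matrices are Jordan_Normal_Form matrices with 0-based indices: entry (i,k)
  corresponds to the paper's entry (i+1,k+1). A sequence xi = (xi_0,...,xi_m) is
  a function nat => complex of which only the values xi 0, ..., xi m are used.\<close>

definition toep :: "(nat \<Rightarrow> complex) \<Rightarrow> nat \<Rightarrow> nat \<Rightarrow> complex mat" where
  "toep xi m n = mat n n (\<lambda>(i,k).
     (let d = (if i \<le> k then k - i else i - k) in if d \<le> m then xi d else 0))"

text \<open>Upper-left block: paper (j,k) with j+k \<le> m+1 gets xi (j+k-1); in 0-based indices
  (i,k) with i+k+1 \<le> m gets xi (i+k+1).
  Lower-right block: paper (n-j+1, n-k+1) with j,k \<ge> 1, j+k \<le> m gets xi (j+k);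
  in 0-based indices (r,c) = (n-j, n-k), so j+k = 2n-r-c.\<close>
definition hank :: "(nat \<Rightarrow> complex) \<Rightarrow> nat \<Rightarrow> nat \<Rightarrow> complex mat" where
  "hank xi m n = mat n n (\<lambda>(i,k).
     if i + k + 1 \<le> m then xi (i + k + 1)
     else if 2 * n - i - k \<le> m then xi (2 * n - i - k)
     else 0)"

end

theory Submission
  imports Defs
begin

lemma entry_eq:
  fixes \<xi> :: "nat \<Rightarrow> complex" and S :: "int \<Rightarrow> real"
  assumes mn: "m \<le> n - 1" and ik: "i < n" "k < n"
    and Sneg: "\<And>z. S (-1-z) = - S z" and Sref: "\<And>z. S (2*int n - z) = - S z"
  defines "F \<equiv> (\<lambda>z::int. if \<bar>z - int i\<bar> \<le> int m then \<xi> (nat \<bar>z - int i\<bar>) * complex_of_real (S z) else 0)"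
  shows "(toep \<xi> m n - hank \<xi> m n) $$ (i,k) * complex_of_real (S (int k))
     = F (int k) + F (-1 - int k) + F (2*int n - int k)"
proof -
  have T: "toep \<xi> m n $$ (i,k) * complex_of_real (S (int k)) = F (int k)"
    using ik by (auto simp: toep_def F_def Let_def nat_diff_distrib' intro!: arg_cong[where f=\<xi>])
  have H: "- (hank \<xi> m n $$ (i,k) * complex_of_real (S (int k))) = F (-1 - int k) + F (2*int n - int k)"
  proof (cases "i + k + 1 \<le> m")
    case True
    have "\<not> (\<bar>2*int n - int k - int i\<bar> \<le> int m)" using True mn ik by auto
    moreover have "\<bar>-1 - int k - int i\<bar> = int (i+k+1)" by simp
    moreover have "nat (int i - (- 1 - int k)) = Suc (i + k)" by simp
    ultimately show ?thesis using True ik Sneg[of "int k"] by (simp add: hank_def F_def)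
  next
    case False
    have f1: "F (-1 - int k) = 0" using False by (simp add: F_def)
    show ?thesis
    proof (cases "2 * n - i - k \<le> m")
      case True
      have "\<bar>2*int n - int k - int i\<bar> = int (2 * n - i - k)" using ik by simp
      moreover have "nat (2*int n - int k - int i) = 2 * n - i - k" using ik by simp
      ultimately show ?thesis using True False ik Sref[of "int k"] f1 by (simp add: hank_def F_def)
    next
      case F2: False
      have "F (2*int n - int k) = 0" using F2 ik by (simp add: F_def)
      then show ?thesis using False F2 f1 ik by (simp add: hank_def)
    qed
  qed
  have eq: "(toep \<xi> m n - hank \<xi> m n) $$ (i,k) = toep \<xi> m n $$ (i,k) - hank \<xi> m n $$ (i,k)"
    using ik by (simp add: toep_def hank_def)
  have "(toep \<xi> m n - hank \<xi> m n) $$ (i,k) * complex_of_real (S (int k)) =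
     toep \<xi> m n $$ (i,k) * complex_of_real (S (int k)) + - (hank \<xi> m n $$ (i,k) * complex_of_real (S (int k)))"
    unfolding eq by (simp add: algebra_simps)
  then show ?thesis unfolding T H by (simp add: add.assoc)
qed

lemma sym_sum:
  fixes g :: "int \<Rightarrow> 'a::comm_monoid_add"
  shows "(\<Sum>d\<in>{-int m..int m}. g d) = g 0 + (\<Sum>l=1..m. g (int l) + g (- int l))"
proof (induction m)
  case 0
  then show ?case by simp
next
  case (Suc m)
  have e: "{-int (Suc m)..int (Suc m)} = insert (- int (Suc m)) (insert (int (Suc m)) {-int m..int m})"
    by auto
  show ?case unfolding e using Suc by (simp add: algebra_simps)
qed

lemma row_sum:
  fixes \<xi> :: "nat \<Rightarrow> complex" and S :: "int \<Rightarrow> real"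
  assumes mn: "m \<le> n - 1" and i: "i < n"
    and Sneg: "\<And>z. S (-1-z) = - S z" and Sref: "\<And>z. S (2*int n - z) = - S z"
    and Sn: "S (int n) = 0"
    and Sadd: "\<And>z l. S (z + int l) + S (z - int l) = 2 * cos (real l * t) * S z"
  shows "(\<Sum>k<n. (toep \<xi> m n - hank \<xi> m n) $$ (i,k) * complex_of_real (S (int k)))
     = (\<xi> 0 + 2 * (\<Sum>l=1..m. \<xi> l * complex_of_real (cos (real l * t)))) * complex_of_real (S (int i))"
proof -
  define F where "F \<equiv> (\<lambda>z::int. if \<bar>z - int i\<bar> \<le> int m then \<xi> (nat \<bar>z - int i\<bar>) * complex_of_real (S z) else 0)"
  have "(\<Sum>k<n. (toep \<xi> m n - hank \<xi> m n) $$ (i,k) * complex_of_real (S (int k)))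
     = (\<Sum>k<n. F (int k) + F (-1 - int k) + F (2*int n - int k))"
    using entry_eq[OF mn i _ Sneg Sref] unfolding F_def by (intro sum.cong) auto
  also have "\<dots> = (\<Sum>k<n. F (int k)) + (\<Sum>k<n. F (-1 - int k)) + (\<Sum>k<n. F (2*int n - int k))"
    by (simp add: sum.distrib)
  also have "(\<Sum>k<n. F (int k)) = (\<Sum>z\<in>{0..<int n}. F z)"
    by (rule sum.reindex_bij_witness[where i=nat and j=int]) auto
  also have "(\<Sum>k<n. F (-1 - int k)) = (\<Sum>z\<in>{-int n..-1}. F z)"
    by (rule sum.reindex_bij_witness[where i="\<lambda>z. nat (-1-z)" and j="\<lambda>k. -1 - int k"]) auto
  also have "(\<Sum>k<n. F (2*int n - int k)) = (\<Sum>z\<in>{int n+1..2*int n}. F z)"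
    by (rule sum.reindex_bij_witness[where i="\<lambda>z. nat (2*int n-z)" and j="\<lambda>k. 2*int n - int k"]) auto
  also have "(\<Sum>z\<in>{0..<int n}. F z) + (\<Sum>z\<in>{-int n..-1}. F z) + (\<Sum>z\<in>{int n+1..2*int n}. F z)
      = (\<Sum>z\<in>{-int n..2*int n}. F z)"
  proof -
    have Fn: "F (int n) = 0" using Sn by (simp add: F_def)
    have e: "{-int n..2*int n} = {-int n..-1} \<union> ({0..<int n} \<union> ({int n+1..2*int n} \<union> {int n}))"
      by auto
    show ?thesis unfolding e
      by (subst sum.union_disjoint; (auto)?)+ (simp add: Fn algebra_simps)
  qed
  also have "\<dots> = (\<Sum>z\<in>{int i - int m..int i + int m}. F z)"
    using mn i by (intro sum.mono_neutral_right) (auto simp: F_def)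
  also have "\<dots> = (\<Sum>d\<in>{-int m..int m}. F (int i + d))"
    by (rule sum.reindex_bij_witness[where j="\<lambda>z. z - int i" and i="\<lambda>d. int i + d"]) auto
  also have "\<dots> = F (int i) + (\<Sum>l=1..m. F (int i + int l) + F (int i + - int l))"
    using sym_sum[of "\<lambda>d. F (int i + d)"] by simp
  also have "\<dots> = \<xi> 0 * complex_of_real (S (int i)) + (\<Sum>l=1..m. \<xi> l * complex_of_real (2 * cos (real l * t) * S (int i)))"
  proof -
    have "F (int i + int l) + F (int i + - int l) = \<xi> l * complex_of_real (2 * cos (real l * t) * S (int i))"
      if "l \<in> {1..m}" for l
    proof -
      have "F (int i + int l) + F (int i + - int l) = \<xi> l * complex_of_real (S (int i + int l) + S (int i - int l))"
        using that by (simp add: F_def algebra_simps)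
      then show ?thesis by (simp only: Sadd)
    qed
    then show ?thesis by (simp add: F_def)
  qed
  also have "\<dots> = (\<xi> 0 + 2 * (\<Sum>l=1..m. \<xi> l * complex_of_real (cos (real l * t)))) * complex_of_real (S (int i))"
    by (simp add: algebra_simps sum_distrib_left sum_distrib_right)
  finally show ?thesis .
qed

lemma eigen:
  fixes \<xi> :: "nat \<Rightarrow> complex" and S :: "int \<Rightarrow> real"
  assumes mn: "m \<le> n - 1"
    and Sneg: "\<And>z. S (-1-z) = - S z" and Sref: "\<And>z. S (2*int n - z) = - S z"
    and Sn: "S (int n) = 0"
    and Sadd: "\<And>z l. S (z + int l) + S (z - int l) = 2 * cos (real l * t) * S z"
  shows "(toep \<xi> m n - hank \<xi> m n) *\<^sub>v vec n (\<lambda>k. C * complex_of_real (S (int k)))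
     = (\<xi> 0 + 2 * (\<Sum>l=1..m. \<xi> l * complex_of_real (cos (real l * t)))) \<cdot>\<^sub>v vec n (\<lambda>k. C * complex_of_real (S (int k)))"
proof (rule eq_vecI)
  fix i assume "i < dim_vec ((\<xi> 0 + 2 * (\<Sum>l=1..m. \<xi> l * complex_of_real (cos (real l * t)))) \<cdot>\<^sub>v vec n (\<lambda>k. C * complex_of_real (S (int k))))"
  then have i: "i < n" by simp
  have "((toep \<xi> m n - hank \<xi> m n) *\<^sub>v vec n (\<lambda>k. C * complex_of_real (S (int k)))) $ i
     = (\<Sum>k<n. (toep \<xi> m n - hank \<xi> m n) $$ (i,k) * (C * complex_of_real (S (int k))))"
    using i by (simp add: scalar_prod_def toep_def hank_def lessThan_atLeast0)
  also have "\<dots> = C * (\<Sum>k<n. (toep \<xi> m n - hank \<xi> m n) $$ (i,k) * complex_of_real (S (int k)))"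
    by (simp add: sum_distrib_left algebra_simps)
  also have "\<dots> = C * ((\<xi> 0 + 2 * (\<Sum>l=1..m. \<xi> l * complex_of_real (cos (real l * t)))) * complex_of_real (S (int i)))"
    using row_sum[OF mn i Sneg Sref Sn Sadd] by simp
  finally show "((toep \<xi> m n - hank \<xi> m n) *\<^sub>v vec n (\<lambda>k. C * complex_of_real (S (int k)))) $ i =
    ((\<xi> 0 + 2 * (\<Sum>l=1..m. \<xi> l * complex_of_real (cos (real l * t)))) \<cdot>\<^sub>v vec n (\<lambda>k. C * complex_of_real (S (int k)))) $ i"
    using i by (simp add: algebra_simps)
qed (simp add: toep_def hank_def)

lemma hank_carrier: "hank \<xi> m n \<in> carrier_mat n n"
  unfolding hank_def by (rule mat_carrier)

theorem mainTheorem1: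
  fixes n m :: nat and \<alpha> \<beta> :: "nat \<Rightarrow> complex" and C :: complex
  assumes "n \<ge> 2" and "1 \<le> m" and "m \<le> n - 1"
    and "invertible_mat (toep \<beta> m n - hank \<beta> m n)"
    and "C \<noteq> 0"
  shows "\<forall>j \<in> {1..n}.
    (let h = 1 / (real n + 1/2);
         A = toep \<alpha> m n - hank \<alpha> m n;
         B = toep \<beta> m n - hank \<beta> m n;
         lam = (\<alpha> 0 + 2 * (\<Sum>l=1..m. \<alpha> l * complex_of_real (cos (real l * real j * pi * h))))
             / (\<beta> 0 + 2 * (\<Sum>l=1..m. \<beta> l * complex_of_real (cos (real l * real j * pi * h))));
         x = vec n (\<lambda>k. C * complex_of_real (sin (real j * pi * (real (k + 1) - 1/2) * h)))
     in x \<noteq> 0\<^sub>v n \<and> A *\<^sub>v x = lam \<cdot>\<^sub>v (B *\<^sub>v x))"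
proof
  fix j assume j: "j \<in> {1..n}"
  define h :: real where "h = 1 / (real n + 1/2)"
  define t where "t = real j * pi * h"
  define S where "S = (\<lambda>z::int. sin (t * (of_int z + 1/2)))"
  define A where "A = toep \<alpha> m n - hank \<alpha> m n"
  define B where "B = toep \<beta> m n - hank \<beta> m n"
  define ma where "ma = \<alpha> 0 + 2 * (\<Sum>l=1..m. \<alpha> l * complex_of_real (cos (real l * t)))"
  define mb where "mb = \<beta> 0 + 2 * (\<Sum>l=1..m. \<beta> l * complex_of_real (cos (real l * t)))"
  define x where "x = vec n (\<lambda>k. C * complex_of_real (S (int k)))"
  have th: "t * (2 * real n + 1) = 2 * real j * pi"
    unfolding t_def h_def by (simp add: field_simps)
  have Sneg: "\<And>z. S (-1-z) = - S z"
  proof -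
    fix z
    have "t * (of_int (-1-z) + 1/2) = - (t * (of_int z + 1/2))" by (simp add: algebra_simps)
    then show "S (-1-z) = - S z" unfolding S_def by simp
  qed
  have Sref: "\<And>z. S (2*int n - z) = - S z"
  proof -
    fix z
    have "t * (of_int (2*int n - z) + 1/2) = 2 * real j * pi - (t * (of_int z + 1/2))"
      using th by (simp add: algebra_simps)
    then show "S (2*int n - z) = - S z" unfolding S_def by (simp add: sin_diff)
  qed
  have Sn: "S (int n) = 0"
  proof -
    have "t * (of_int (int n) + 1/2) = real j * pi" using th by (simp add: algebra_simps)
    then show ?thesis unfolding S_def by simp
  qed
  have Sadd: "\<And>z l. S (z + int l) + S (z - int l) = 2 * cos (real l * t) * S z"
  proof -
    fix z l
    have "t * (of_int (z + int l) + 1/2) = t * (of_int z + 1/2) + real l * t"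
         "t * (of_int (z - int l) + 1/2) = t * (of_int z + 1/2) - real l * t"
      by (simp_all add: algebra_simps)
    then show "S (z + int l) + S (z - int l) = 2 * cos (real l * t) * S z"
      unfolding S_def by (simp add: sin_add sin_diff)
  qed
  have eA: "A *\<^sub>v x = ma \<cdot>\<^sub>v x"
    unfolding A_def x_def ma_def by (rule eigen[OF assms(3) Sneg Sref Sn Sadd])
  have eB: "B *\<^sub>v x = mb \<cdot>\<^sub>v x"
    unfolding B_def x_def mb_def by (rule eigen[OF assms(3) Sneg Sref Sn Sadd])
  have x0: "x $ 0 \<noteq> 0"
  proof -
    have pj: "pi * real j \<le> pi * real n" using j by (simp add: mult_left_mono)
    have pn: "pi * real n \<ge> 0" by simp
    have e: "t * (0 + 1/2) = pi * real j / (2 * real n + 1)"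
      unfolding t_def h_def by (simp add: field_simps)
    have "pi * (2 * real n + 1) = pi * real n + pi * real n + pi" by (simp add: algebra_simps)
    then have "pi * real j < pi * (2 * real n + 1)" using pj pn pi_gt_zero by linarith
    then have "0 < t * (0 + 1/2)" "t * (0 + 1/2) < pi"
      unfolding e using j by (auto simp: divide_less_eq)
    then have "S 0 \<noteq> 0" unfolding S_def using sin_gt_zero by (metis less_irrefl of_int_0)
    then show ?thesis using assms(1,5) unfolding x_def by simp
  qed
  have xn: "x \<noteq> 0\<^sub>v n"
    using x0 assms(1) by auto
  have mb: "mb \<noteq> 0"
  proof
    assume "mb = 0"
    have dx: "dim_vec x = n" unfolding x_def by simp
    have "B *\<^sub>v x = 0 \<cdot>\<^sub>v x" using eB \<open>mb = 0\<close> by (simp only:)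
    also have "0 \<cdot>\<^sub>v x = 0\<^sub>v n" by (rule eq_vecI) (simp_all add: dx)
    finally have Bx: "B *\<^sub>v x = 0\<^sub>v n" .
    have Bc: "B \<in> carrier_mat n n" unfolding B_def by (intro minus_carrier_mat hank_carrier)
    have "invertible_mat B" using assms(4) unfolding B_def .
    then obtain B' where i1: "B * B' = 1\<^sub>m (dim_row B)" and i2: "B' * B = 1\<^sub>m (dim_row B')"
      unfolding invertible_mat_def inverts_mat_def by blast
    have rB: "dim_row B = n" "dim_col B = n" using Bc by auto
    have "dim_col (B * B') = n" using i1 rB by (simp only: index_one_mat)
    then have c1: "dim_col B' = n" by (simp only: index_mult_mat)
    have "dim_col (B' * B) = dim_row B'" using i2 by (simp only: index_one_mat)
    then have c2: "dim_row B' = n" using rB by (simp only: index_mult_mat)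
    have inv: "B' * B = 1\<^sub>m n" using i2 c2 by simp
    have B'c: "B' \<in> carrier_mat n n" using c1 c2 by (intro carrier_matI)
    have xc: "x \<in> carrier_vec n" unfolding x_def by (rule vec_carrier)
    have "x = (B' * B) *\<^sub>v x" by (simp only: inv one_mult_mat_vec[OF xc])
    also have "\<dots> = B' *\<^sub>v (B *\<^sub>v x)" by (rule assoc_mult_mat_vec[OF B'c Bc xc])
    also have "\<dots> = 0\<^sub>v n" unfolding Bx
    proof (rule eq_vecI)
      fix i assume "i < dim_vec (0\<^sub>v n :: complex vec)"
      then have i: "i < n" by simp
      have "dim_vec (row B' i) = n" using c1 by (simp only: index_row(2))
      then have rc: "row B' i \<in> carrier_vec n" by (rule carrier_vecI)
      have "(B' *\<^sub>v 0\<^sub>v n) $ i = row B' i \<bullet> 0\<^sub>v n" using i c2 by (simp only: index_mult_mat_vec)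
      also have "\<dots> = 0" by (rule scalar_prod_right_zero[OF rc])
      also have "\<dots> = 0\<^sub>v n $ i" using i by (simp only: index_zero_vec)
      finally show "(B' *\<^sub>v 0\<^sub>v n) $ i = 0\<^sub>v n $ i" .
    qed (simp add: c2)
    finally have "x = 0\<^sub>v n" .
    with xn show False by blast
  qed
  have "A *\<^sub>v x = (ma / mb) \<cdot>\<^sub>v (B *\<^sub>v x)"
    unfolding eA eB smult_smult_assoc using mb by simp
  moreover have "x = vec n (\<lambda>k. C * complex_of_real (sin (real j * pi * (real (k + 1) - 1/2) * h)))"
    unfolding x_def S_def t_def by (intro eq_vecI) (simp_all add: algebra_simps)
  ultimately show "let h = 1 / (real n + 1/2);
         A = toep \<alpha> m n - hank \<alpha> m n;
         B = toep \<beta> m n - hank \<beta> m n;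
         lam = (\<alpha> 0 + 2 * (\<Sum>l=1..m. \<alpha> l * complex_of_real (cos (real l * real j * pi * h))))
             / (\<beta> 0 + 2 * (\<Sum>l=1..m. \<beta> l * complex_of_real (cos (real l * real j * pi * h))));
         x = vec n (\<lambda>k. C * complex_of_real (sin (real j * pi * (real (k + 1) - 1/2) * h)))
     in x \<noteq> 0\<^sub>v n \<and> A *\<^sub>v x = lam \<cdot>\<^sub>v (B *\<^sub>v x)"
    using xn unfolding Let_def h_def[symmetric] A_def[symmetric] B_def[symmetric]
    by (simp add: ma_def mb_def t_def mult.assoc)
qed
end
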